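(* Let $\mathcal{K}\subseteq\mathbb{R}^d$ be a convex body, $\kappa\in\mathbb{R}^d$, $\nu\in\mathbb{R}$, and let $a_1,\dots,a_\tau\in\mathbb{R}^d$. For $p\in\mathbb{R}^d$ define $u(p,\nu)=\sum_{t=1}^{\tau}\mathbf{1}\{\langle p-\kappa,a_t\rangle+\nu<0\}$, and for an integer $\bar c\ge0$ let $\mathcal{P}(\bar c,\nu)=\{p\in\mathcal{K}:u(p,\nu)\le\bar c\}$. Then every point $p\in\mathrm{conv}(\mathcal{P}(\bar c,\nu))$ satisfies $u(p,\nu)\le\bar c\,(d+1)$.
   Context: In the paper, $a_t=\Pi_{L}x_t$ are projections of contexts onto a subspace $L$, $\kappa$ is the (approximate) centroid of the current knowledge set, and $u(p,\nu)$ is called the $\nu$-margin projected undesirability level of $p$; $\mathrm{conv}$ denotes convex hull. *)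

theory Defs
  imports "HOL-Analysis.Analysis"
begin

definition convex_body :: "'a::euclidean_space set \<Rightarrow> bool" where
  "convex_body K \<longleftrightarrow> compact K \<and> convex K \<and> interior K \<noteq> {}"

definition undesirability ::
  "'a::euclidean_space \<Rightarrow> (nat \<Rightarrow> 'a) \<Rightarrow> nat \<Rightarrow> 'a \<Rightarrow> real \<Rightarrow> nat" where
  "undesirability \<kappa> a \<tau> p \<nu> =
     (\<Sum>t = 1..\<tau>. (if (p - \<kappa>) \<bullet> a t + \<nu> < 0 then 1 else 0))"

definition low_undesirability_set ::
  "'a::euclidean_space set \<Rightarrow> 'a \<Rightarrow> (nat \<Rightarrow> 'a) \<Rightarrow> nat \<Rightarrow> nat \<Rightarrow> real \<Rightarrow> 'a set" where
  "low_undesirability_set K \<kappa> a \<tau> c \<nu> = {p \<in> K. undesirability \<kappa> a \<tau> p \<nu> \<le> c}"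

end

theory Submission
  imports Defs
begin

lemma und_card:
  "undesirability \<kappa> a \<tau> p \<nu> = card {t\<in>{1..\<tau>}. (p - \<kappa>) \<bullet> a t + \<nu> < 0}"
  unfolding undesirability_def by (simp add: sum.If_cases Int_def conj_commute)

lemma hull_neg:
  fixes S :: "'a::euclidean_space set"
  assumes "p \<in> convex hull S" "(p - \<kappa>) \<bullet> b + \<nu> < 0"
  shows "\<exists>q\<in>S. (q - \<kappa>) \<bullet> b + \<nu> < 0"
proof (rule ccontr)
  assume nq: "\<not> ?thesis"
  hence "S \<subseteq> {x. b \<bullet> x \<ge> b \<bullet> \<kappa> - \<nu>}"
  proof -
    have "b \<bullet> x \<ge> b \<bullet> \<kappa> - \<nu>" if "x \<in> S" for x
    proof -
      from nq that have "\<not> (x - \<kappa>) \<bullet> b + \<nu> < 0" by blast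
      thus ?thesis by (simp add: inner_diff_left inner_commute[of x b] inner_commute[of \<kappa> b])
    qed
    thus ?thesis by blast
  qed
  hence "convex hull S \<subseteq> {x. b \<bullet> x \<ge> b \<bullet> \<kappa> - \<nu>}"
    by (intro hull_minimal) (auto simp: convex_halfspace_ge)
  with assms(1) have "b \<bullet> p \<ge> b \<bullet> \<kappa> - \<nu>" by blast
  with assms(2) show False by (simp add: inner_diff_left inner_commute[of p b] inner_commute[of \<kappa> b])
qed

theorem mainTheorem5:
  fixes K :: "'a::euclidean_space set" and \<kappa> :: 'a and \<nu> :: real
    and a :: "nat \<Rightarrow> 'a" and \<tau> :: nat and c :: nat and p :: 'a
  assumes "convex_body K"
    and "p \<in> convex hull (low_undesirability_set K \<kappa> a \<tau> c \<nu>)"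
  shows "undesirability \<kappa> a \<tau> p \<nu> \<le> c * (DIM('a) + 1)"
proof -
  let ?P = "low_undesirability_set K \<kappa> a \<tau> c \<nu>"
  define T where "T q = {t\<in>{1..\<tau>}. (q - \<kappa>) \<bullet> a t + \<nu> < 0}" for q
  obtain S where S: "finite S" "S \<subseteq> ?P" "card S \<le> DIM('a) + 1" "p \<in> convex hull S"
    using assms(2) unfolding caratheodory[of ?P] by blast
  have "T p \<subseteq> (\<Union>q\<in>S. T q)"
    using hull_neg[OF S(4)] unfolding T_def by blast
  hence "card (T p) \<le> card (\<Union>q\<in>S. T q)"
    by (intro card_mono) (auto simp: T_def S(1))
  also have "\<dots> \<le> (\<Sum>q\<in>S. card (T q))" by (rule card_UN_le[OF S(1)])
  also have "\<dots> \<le> (\<Sum>q\<in>S. c)"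
  proof (rule sum_mono)
    fix q assume "q \<in> S"
    with S(2) show "card (T q) \<le> c"
      by (auto simp: low_undesirability_set_def und_card T_def)
  qed
  also have "\<dots> = card S * c" by simp
  also have "\<dots> \<le> c * (DIM('a) + 1)" using S(3) by (metis mult.commute mult_le_mono2)
  finally show ?thesis by (simp add: und_card T_def)
qed

end
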